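(* Let $k \geq 2$ be an integer, let $G$ be a $k$-connected $(K_2 \cup kK_1)$-free graph, and let $C$ be a longest cycle in $G$. Then every component of $G - V(C)$ consists of a single vertex.
   Context: All graphs are finite, undirected and simple. For graphs $R, R'$, $R \cup R'$ is their disjoint union and $kR$ is the disjoint union of $k$ copies of $R$; $K_n$ is the complete graph on $n$ vertices. A graph $G$ is $R$-free if it contains no induced subgraph isomorphic to $R$. *)

theory Defs
  imports Main
begin

definition graph :: "'a set \<Rightarrow> ('a \<Rightarrow> 'a \<Rightarrow> bool) \<Rightarrow> bool" where
  "graph V E \<longleftrightarrow> finite V \<and> (\<forall>x y. E x y \<longrightarrow> x \<in> V \<and> y \<in> V)
     \<and> (\<forall>x y. E x y \<longrightarrow> E y x) \<and> (\<forall>x. \<not> E x x)"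

definition induced_edges :: "('a \<Rightarrow> 'a \<Rightarrow> bool) \<Rightarrow> 'a set \<Rightarrow> 'a \<Rightarrow> 'a \<Rightarrow> bool" where
  "induced_edges E S x y \<longleftrightarrow> x \<in> S \<and> y \<in> S \<and> E x y"

definition connected_graph :: "'a set \<Rightarrow> ('a \<Rightarrow> 'a \<Rightarrow> bool) \<Rightarrow> bool" where
  "connected_graph V E \<longleftrightarrow> V \<noteq> {} \<and> (\<forall>x\<in>V. \<forall>y\<in>V. (induced_edges E V)\<^sup>*\<^sup>* x y)"

definition k_connected :: "nat \<Rightarrow> 'a set \<Rightarrow> ('a \<Rightarrow> 'a \<Rightarrow> bool) \<Rightarrow> bool" where
  "k_connected k V E \<longleftrightarrow> card V > k \<and>
     (\<forall>S. S \<subseteq> V \<and> card S < k \<longrightarrow> connected_graph (V - S) (induced_edges E (V - S)))"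

definition has_induced_copy :: "'b set \<Rightarrow> ('b \<Rightarrow> 'b \<Rightarrow> bool) \<Rightarrow> 'a set \<Rightarrow> ('a \<Rightarrow> 'a \<Rightarrow> bool) \<Rightarrow> bool" where
  "has_induced_copy VR ER V E \<longleftrightarrow> (\<exists>f. inj_on f VR \<and> f ` VR \<subseteq> V \<and>
     (\<forall>x\<in>VR. \<forall>y\<in>VR. E (f x) (f y) \<longleftrightarrow> ER x y))"

definition R_free :: "'b set \<Rightarrow> ('b \<Rightarrow> 'b \<Rightarrow> bool) \<Rightarrow> 'a set \<Rightarrow> ('a \<Rightarrow> 'a \<Rightarrow> bool) \<Rightarrow> bool" where
  "R_free VR ER V E \<longleftrightarrow> \<not> has_induced_copy VR ER V E"

definition K2_kK1_V :: "nat \<Rightarrow> nat set" where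
  "K2_kK1_V k = {0..k+1}"

definition K2_kK1_E :: "nat \<Rightarrow> nat \<Rightarrow> nat \<Rightarrow> bool" where
  "K2_kK1_E k x y \<longleftrightarrow> (x = 0 \<and> y = 1) \<or> (x = 1 \<and> y = 0)"

definition is_cycle :: "'a set \<Rightarrow> ('a \<Rightarrow> 'a \<Rightarrow> bool) \<Rightarrow> 'a list \<Rightarrow> bool" where
  "is_cycle V E c \<longleftrightarrow> length c \<ge> 3 \<and> distinct c \<and> set c \<subseteq> V \<and>
     (\<forall>i < length c. E (c ! i) (c ! ((i + 1) mod length c)))"

definition longest_cycle :: "'a set \<Rightarrow> ('a \<Rightarrow> 'a \<Rightarrow> bool) \<Rightarrow> 'a list \<Rightarrow> bool" where
  "longest_cycle V E c \<longleftrightarrow> is_cycle V E c \<and> (\<forall>d. is_cycle V E d \<longrightarrow> length d \<le> length c)"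

definition is_component :: "'a set \<Rightarrow> ('a \<Rightarrow> 'a \<Rightarrow> bool) \<Rightarrow> 'a set \<Rightarrow> bool" where
  "is_component V E X \<longleftrightarrow> (\<exists>x\<in>V. X = {y \<in> V. (induced_edges E V)\<^sup>*\<^sup>* x y})"

end

theory Submission
  imports Defs
begin


lemma cyc_iff:
  assumes "c \<noteq> []"
  shows "(\<forall>i<length c. E (c!i) (c!((i+1) mod length c))) \<longleftrightarrow> successively E c \<and> E (last c) (hd c)"
proof
  assume H: "\<forall>i<length c. E (c!i) (c!((i+1) mod length c))"
  have "successively E c"
    unfolding successively_conv_nth
  proof (intro allI impI)
    fix i assume "Suc i < length c"
    then show "E (c ! i) (c ! Suc i)" using H[rule_format, of i] by simp
  qed
  moreover have "E (last c) (hd c)"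
    using H[rule_format, of "length c - 1"] assms
    by (simp add: last_conv_nth hd_conv_nth)
  ultimately show "successively E c \<and> E (last c) (hd c)" by simp
next
  assume H: "successively E c \<and> E (last c) (hd c)"
  show "\<forall>i<length c. E (c!i) (c!((i+1) mod length c))"
  proof (intro allI impI)
    fix i assume i: "i < length c"
    show "E (c!i) (c!((i+1) mod length c))"
    proof (cases "Suc i < length c")
      case True
      then show ?thesis using H successively_nth[of E c i] by simp
    next
      case False
      then have "Suc i = length c" using i by auto
      then have "i = length c - 1" "(i+1) mod length c = 0" by auto
      then show ?thesis using H assms by (simp add: last_conv_nth hd_conv_nth)
    qed
  qed
qed

definition cyc :: "('a \<Rightarrow> 'a \<Rightarrow> bool) \<Rightarrow> 'a list \<Rightarrow> bool" where
  "cyc E c \<longleftrightarrow> c \<noteq> [] \<and> successively E c \<and> E (last c) (hd c)"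

lemma cyc_rotate1: assumes c: "cyc E c" shows "cyc E (rotate1 c)"
proof (cases c)
  case Nil
  then show ?thesis using c by (simp add: cyc_def)
next
  case (Cons x xs)
  show ?thesis
  proof (cases "xs = []")
    case True then show ?thesis using c Cons by simp
  next
    case False
    then show ?thesis using c Cons
      by (auto simp: cyc_def successively_append_iff successively_Cons)
  qed
qed

lemma cyc_rotate: "cyc E c \<Longrightarrow> cyc E (rotate m c)"
  by (induction m) (auto simp: cyc_rotate1)

lemma is_cycle_iff: "is_cycle V E c \<longleftrightarrow> length c \<ge> 3 \<and> distinct c \<and> set c \<subseteq> V \<and> cyc E c"
proof -
  have "length c \<ge> 3 \<Longrightarrow> c \<noteq> []" by auto
  then show ?thesis unfolding is_cycle_def cyc_def using cyc_iff[of c E] by auto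
qed

lemma last_take_Suc: "n < length xs \<Longrightarrow> last (take (Suc n) xs) = xs ! n"
  by (metis last_snoc take_Suc_conv_app_nth)

lemma path_exists:
  assumes "(induced_edges E S)\<^sup>*\<^sup>* a b" "a \<in> S"
  shows "\<exists>p. p \<noteq> [] \<and> hd p = a \<and> last p = b \<and> distinct p \<and> set p \<subseteq> S \<and> successively E p"
  using assms(1)
proof (induction rule: rtranclp_induct)
  case base
  then show ?case using assms(2) by (intro exI[of _ "[a]"]) auto
next
  case (step y z)
  then obtain p where p: "p \<noteq> []" "hd p = a" "last p = y" "distinct p" "set p \<subseteq> S" "successively E p"
    by blast
  have yz: "y \<in> S" "z \<in> S" "E y z" using step(2) by (auto simp: induced_edges_def)
  show ?case
  proof (cases "z \<in> set p")
    case True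
    then obtain m where m: "m < length p" "p ! m = z" by (auto simp: in_set_conv_nth)
    let ?q = "take (Suc m) p"
    have "successively E (?q @ drop (Suc m) p)" using p(6) by simp
    then have "successively E ?q" by (simp only: successively_append_iff)
    moreover have "hd ?q = a" using p m by simp
    moreover have "last ?q = z" using m last_take_Suc by metis
    moreover have "set ?q \<subseteq> S" using p(5) set_take_subset by fast
    moreover have "?q \<noteq> []" using p(1) by simp
    moreover have "distinct ?q" using p(4) by simp
    ultimately show ?thesis by blast
  next
    case False
    have "successively E (p @ [z])" using p yz by (simp add: successively_append_iff)
    moreover have "hd (p @ [z]) = a" using p by simp
    moreover have "distinct (p @ [z])" using p False by simp
    ultimately show ?thesis using p yz
      by (intro exI[of _ "p @ [z]"]) auto
  qed
qed

declare rotate_Suc[simp del]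

lemma rot_facts:
  assumes "distinct C" "i < length C" "length C \<ge> 3"
  shows "hd (rotate (Suc i) C) = C ! (Suc i mod length C)"
    and "last (rotate (Suc i) C) = C ! i"
proof -
  have ne: "C \<noteq> []" using assms by auto
  show "hd (rotate (Suc i) C) = C ! (Suc i mod length C)" using hd_rotate_conv_nth[OF ne] by simp
  have "last (rotate (Suc i) C) = rotate (Suc i) C ! (length C - 1)"
    using ne by (simp add: last_conv_nth)
  also have "\<dots> = C ! ((Suc i + (length C - 1)) mod length C)"
    using ne by (simp add: nth_rotate)
  also have "(Suc i + (length C - 1)) = i + length C" using ne by (cases C) auto
  finally show "last (rotate (Suc i) C) = C ! i" using assms by simp
qed

lemma claimA:
  assumes g: "graph V E" and lc: "longest_cycle V E C" and i: "i < length C"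
    and p: "p \<noteq> []" "distinct p" "set p \<subseteq> V - set C" "successively E p"
    and e1: "E (C!i) (hd p)" and e2: "E (last p) (C!((i+1) mod length C))"
  shows False
proof -
  have cC: "is_cycle V E C" using lc unfolding longest_cycle_def by blast
  then have C3: "length C \<ge> 3" "distinct C" "set C \<subseteq> V" "cyc E C" by (auto simp: is_cycle_iff)
  let ?d = "rotate (Suc i) C"
  have cd: "cyc E ?d" using cyc_rotate C3 by blast
  have hd: "hd ?d = C!((i+1) mod length C)" and ld: "last ?d = C ! i"
    using rot_facts[OF C3(2) i C3(1)] by auto
  let ?e = "?d @ p"
  have dne: "?d \<noteq> []" using C3 by auto
  have "cyc E ?e" using cd p e1 e2 hd ld dne
    by (auto simp: cyc_def successively_append_iff)
  moreover have "distinct ?e" using C3 p by auto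
  moreover have "set ?e \<subseteq> V" using C3 p by auto
  moreover have "length ?e \<ge> 3" using C3 by simp
  ultimately have "is_cycle V E ?e" by (simp add: is_cycle_iff)
  then have "length ?e \<le> length C" using lc unfolding longest_cycle_def by blast
  then show False using p by simp
qed

lemma claimB:
  assumes g: "graph V E" and lc: "longest_cycle V E C" and i: "i < length C" and j: "j < length C"
    and ij: "i \<noteq> j"
    and p: "p \<noteq> []" "distinct p" "set p \<subseteq> V - set C" "successively E p"
    and e1: "E (C!i) (hd p)" and e2: "E (last p) (C!j)"
    and e3: "E (C!((i+1) mod length C)) (C!((j+1) mod length C))"
  shows False
proof -
  have sym: "\<And>x y. E x y \<Longrightarrow> E y x" using g by (simp add: graph_def)
  have cC: "is_cycle V E C" using lc unfolding longest_cycle_def by blast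
  then have C3: "length C \<ge> 3" "distinct C" "set C \<subseteq> V" "cyc E C" by (auto simp: is_cycle_iff)
  define n where "n = length C"
  define d where "d = rotate (Suc i) C"
  define m where "m = (j + n - Suc i) mod n"
  have n3: "n \<ge> 3" using C3 n_def by simp
  have cd: "cyc E d" using cyc_rotate C3 d_def by blast
  have hd: "hd d = C!((i+1) mod n)" and ld: "last d = C ! i"
    using rot_facts[OF C3(2) i C3(1)] d_def n_def by auto
  have ldn: "length d = n" using d_def n_def by simp
  have mn: "m < n" using n3 m_def by simp
  have dm: "d ! m = C ! j"
  proof -
    have "d ! m = C ! ((Suc i + m) mod n)" using mn d_def n_def by (simp add: nth_rotate)
    also have "(Suc i + m) mod n = (Suc i + (j + n - Suc i)) mod n" unfolding m_def
      by (simp only: mod_add_right_eq)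
    also have "Suc i + (j + n - Suc i) = j + n" using i n_def by simp
    finally show ?thesis using j n_def by simp
  qed
  have mn1: "Suc m < n"
  proof (rule ccontr)
    assume "\<not> Suc m < n"
    then have "m = n - 1" using mn by simp
    moreover have "d \<noteq> []" using ldn n3 by auto
    ultimately have "d ! m = last d" using ldn by (simp add: last_conv_nth)
    then have "C ! j = C ! i" using dm ld by simp
    then show False using C3(2) i j ij nth_eq_iff_index_eq by metis
  qed
  have dm1: "d ! Suc m = C ! ((j+1) mod n)"
  proof -
    have "d ! Suc m = C ! ((Suc i + Suc m) mod n)" using mn1 d_def n_def by (simp add: nth_rotate)
    also have "(Suc i + Suc m) mod n = Suc ((Suc i + m) mod n) mod n" by (simp add: mod_Suc_eq)
    also have "(Suc i + m) mod n = j"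
    proof -
      have "(Suc i + m) mod n = (Suc i + (j + n - Suc i)) mod n" unfolding m_def
        by (simp only: mod_add_right_eq)
      also have "Suc i + (j + n - Suc i) = j + n" using i n_def by simp
      finally show ?thesis using j n_def by simp
    qed
    finally show ?thesis by simp
  qed
  define A where "A = take (Suc m) d"
  define B where "B = drop (Suc m) d"
  have dAB: "d = A @ B" using A_def B_def by simp
  have Ane: "A \<noteq> []" and Bne: "B \<noteq> []" using A_def B_def mn1 ldn by auto
  have sd: "successively E d" using cd by (simp add: cyc_def)
  then have sA: "successively E A" and sB: "successively E B"
    using dAB successively_append_iff by metis+
  have sAr: "successively E (rev A)" using sA sym
    by (simp add: successively_rev) (metis successively_mono)
  have hA: "hd A = C!((i+1) mod n)" using hd dAB Ane by simp
  have lA: "last A = C ! j" using dm A_def mn ldn last_take_Suc by metis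
  have hB: "hd B = C ! ((j+1) mod n)" using dm1 B_def mn1 ldn by (simp add: hd_drop_conv_nth)
  have lB: "last B = C ! i" using ld dAB Bne by simp
  let ?e = "rev A @ B @ p"
  have "successively E (B @ p)" using sB p e1 lB Bne by (auto simp: successively_append_iff)
  then have "successively E ?e" using sAr Ane Bne hA hB e3 n_def
    by (auto simp: successively_append_iff last_rev)
  moreover have "hd ?e = C ! j" using Ane lA by (simp add: hd_rev)
  moreover have "last ?e = last p" using p by simp
  ultimately have "cyc E ?e" using e2 Ane by (simp add: cyc_def)
  moreover have "distinct ?e"
  proof -
    have "distinct (A @ B)" using C3 dAB d_def by (metis distinct_rotate)
    moreover have "set (A @ B) = set C" using dAB d_def by (metis set_rotate)
    ultimately show ?thesis using p by auto
  qed
  moreover have "set ?e \<subseteq> V"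
  proof -
    have "set (A @ B) = set C" using dAB d_def by (metis set_rotate)
    then show ?thesis using C3 p by auto
  qed
  moreover have "length ?e \<ge> 3" using ldn dAB n3 by simp
  ultimately have "is_cycle V E ?e" by (simp add: is_cycle_iff)
  then have "length ?e \<le> length C" using lc unfolding longest_cycle_def by blast
  moreover have "length p > 0" using p by simp
  moreover have "length A + length B = length C" using ldn dAB n_def by (metis length_append)
  ultimately show False by simp
qed


lemma induced_idem: "induced_edges (induced_edges E S) S = induced_edges E S"
  by (auto simp: induced_edges_def fun_eq_iff)

lemma sucmod_inj: "a < n \<Longrightarrow> b < n \<Longrightarrow> Suc a mod n = Suc b mod n \<Longrightarrow> a = b"
  by (cases "Suc a = n"; cases "Suc b = n") auto

lemma rtranclp_sym:
  assumes "\<And>a b. R a b \<Longrightarrow> R b a" "R\<^sup>*\<^sup>* x y"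
  shows "R\<^sup>*\<^sup>* y x"
  using assms(2)
proof (induction rule: rtranclp_induct)
  case base then show ?case by simp
next
  case (step y z)
  then show ?case using assms(1) by (meson converse_rtranclp_into_rtranclp)
qed

theorem mainTheorem8:
  fixes V :: "'a set" and E :: "'a \<Rightarrow> 'a \<Rightarrow> bool" and k :: nat and C :: "'a list"
  assumes "k \<ge> 2"
    and "graph V E"
    and "k_connected k V E"
    and "R_free (K2_kK1_V k) (K2_kK1_E k) V E"
    and "longest_cycle V E C"
  shows "\<forall>X. is_component (V - set C) (induced_edges E (V - set C)) X \<longrightarrow> card X = 1"
proof (intro allI impI)
  fix X
  assume comp: "is_component (V - set C) (induced_edges E (V - set C)) X"
  note g = assms(2) and lc = assms(5)
  have sym: "\<And>x y. E x y \<Longrightarrow> E y x" using g unfolding graph_def by blast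
  have irr: "\<And>x. \<not> E x x" and fin: "finite V"
    and inV: "\<And>x y. E x y \<Longrightarrow> x \<in> V"
    using g unfolding graph_def by blast+
  have cC: "is_cycle V E C" using lc by (simp add: longest_cycle_def)
  then have C3: "length C \<ge> 3" "distinct C" "set C \<subseteq> V" by (auto simp: is_cycle_iff)
  define S where "S = V - set C"
  define R where "R = induced_edges E S"
  define n where "n = length C"
  have n0: "n > 0" using C3(1) n_def by linarith
  have Rsym: "\<And>a b. R a b \<Longrightarrow> R b a" unfolding R_def induced_edges_def using sym by blast
  obtain x where x0: "x \<in> V - set C"
    and X0: "X = {y \<in> V - set C. (induced_edges (induced_edges E (V - set C)) (V - set C))\<^sup>*\<^sup>* x y}"
    using comp unfolding is_component_def by blast
  have x: "x \<in> S" using x0 S_def by simp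
  have X: "X = {y \<in> S. R\<^sup>*\<^sup>* x y}" using X0 unfolding induced_idem S_def R_def .
  have xX: "x \<in> X" using x X by simp
  have finX: "finite X" using X fin S_def by auto
  show "card X = 1"
  proof (rule ccontr)
    assume "card X \<noteq> 1"
    then have "X \<noteq> {x}" by auto
    then obtain v where vX: "v \<in> X" "v \<noteq> x" using xX by blast
    then have "R\<^sup>*\<^sup>* x v" using X by simp
    then obtain w where Rxw: "R x w" using vX(2)
      by (cases rule: converse_rtranclpE) auto
    have Exw: "E x w" and wS: "w \<in> S"
      using Rxw unfolding R_def induced_edges_def by blast+
    have wX: "w \<in> X" using Rxw X wS by auto
    have pathH: "\<exists>p. p \<noteq> [] \<and> hd p = h \<and> last p = h' \<and> distinct p \<and> set p \<subseteq> S \<and> successively E p"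
      if "h \<in> X" "h' \<in> X" for h h'
    proof -
      have "R\<^sup>*\<^sup>* x h" "R\<^sup>*\<^sup>* x h'" "h \<in> S" using that X by auto
      then have "R\<^sup>*\<^sup>* h x" using rtranclp_sym[of R x h] Rsym by blast
      then have "R\<^sup>*\<^sup>* h h'" using \<open>R\<^sup>*\<^sup>* x h'\<close> by (rule rtranclp_trans)
      then show ?thesis using path_exists[of E S h h'] \<open>h \<in> S\<close> R_def by blast
    qed
    define I where "I = {i. i < n \<and> (\<exists>h\<in>X. E (C!i) h)}"
    have clA: "\<not> E (C!((i+1) mod n)) h" if iI: "i \<in> I" and hX: "h \<in> X" for i h
    proof
      assume e: "E (C!((i+1) mod n)) h"
      obtain h0 where h0: "h0 \<in> X" "E (C!i) h0" and i: "i < n" using iI I_def by auto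
      obtain p where p: "p \<noteq> []" "hd p = h0" "last p = h" "distinct p" "set p \<subseteq> S" "successively E p"
        using pathH[OF h0(1) hX] by blast
      have e': "E (last p) (C!((i+1) mod length C))" using sym[OF e] p(3) n_def by simp
      have p5: "set p \<subseteq> V - set C" using p(5) S_def by simp
      have i': "i < length C" using i n_def by simp
      show False
        using claimA[OF g lc i' p(1) p(4) p5 p(6) _ e'] h0 p(2) by simp
    qed
    have clB: "\<not> E (C!((i+1) mod n)) (C!((j+1) mod n))" if iI: "i \<in> I" and jI: "j \<in> I" and ij: "i \<noteq> j" for i j
    proof
      assume e: "E (C!((i+1) mod n)) (C!((j+1) mod n))"
      obtain h0 where h0: "h0 \<in> X" "E (C!i) h0" and i: "i < n" using iI I_def by auto
      obtain h1 where h1: "h1 \<in> X" "E (C!j) h1" and j: "j < n" using jI I_def by auto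
      obtain p where p: "p \<noteq> []" "hd p = h0" "last p = h1" "distinct p" "set p \<subseteq> S" "successively E p"
        using pathH[OF h0(1) h1(1)] by blast
      have e': "E (last p) (C!j)" using sym[OF h1(2)] p(3) by simp
      have p5: "set p \<subseteq> V - set C" using p(5) S_def by simp
      have i': "i < length C" "j < length C" using i j n_def by auto
      have e3: "E (C!((i+1) mod length C)) (C!((j+1) mod length C))" using e n_def by simp
      show False
        using claimB[OF g lc i'(1) i'(2) ij p(1) p(4) p5 p(6) _ e' e3] h0 p(2) by simp
    qed
    have cardI: "card I \<ge> k"
    proof (rule ccontr)
      assume "\<not> card I \<ge> k"
      then have cI: "card I < k" by simp
      define N where "N = (\<lambda>i. C!i) ` I"
      have finI: "finite I" using I_def by simp
      have "card N \<le> card I" using N_def card_image_le finI by blast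
      then have cN: "card N < k" using cI by simp
      have NC: "N \<subseteq> set C" using N_def I_def n_def by auto
      have NV: "N \<subseteq> V" using NC C3 by auto
      have conn: "connected_graph (V - N) (induced_edges E (V - N))"
        using assms(3) cN NV by (simp add: k_connected_def)
      obtain c where c: "c \<in> set C" "c \<notin> N"
      proof (cases "I = {}")
        case True
        have "C!0 \<in> set C" using C3(1) by (intro nth_mem) linarith
        moreover have "C!0 \<notin> N" using True N_def by simp
        ultimately show ?thesis using that by blast
      next
        case False
        then obtain i where i: "i \<in> I" by blast
        then have "i < n" using I_def by simp
        have "(i+1) mod n < length C" using n_def n0 by simp
        then have cm: "C!((i+1) mod n) \<in> set C" by (rule nth_mem)
        have "C!((i+1) mod n) \<notin> N"
        proof
          assume "C!((i+1) mod n) \<in> N"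
          then obtain j where "j \<in> I" "C!j = C!((i+1) mod n)" using N_def by auto
          then obtain h where "h \<in> X" "E (C!((i+1) mod n)) h" using I_def by auto
          then show False using clA[OF i] by blast
        qed
        then show ?thesis using that cm by blast
      qed
      have xVN: "x \<in> V - N" using x S_def NC by auto
      have cVN: "c \<in> V - N" using c C3 by auto
      have reach: "(induced_edges E (V - N))\<^sup>*\<^sup>* x c" using conn xVN cVN
        unfolding connected_graph_def induced_idem by blast
      have "z \<in> X" if "(induced_edges E (V - N))\<^sup>*\<^sup>* x z" for z
        using that
      proof (induction rule: rtranclp_induct)
        case base then show ?case using xX by simp
      next
        case (step y z)
        have yz: "E y z" "z \<in> V - N" using step(2) by (auto simp: induced_edges_def)
        have zC: "z \<notin> set C"
        proof
          assume "z \<in> set C"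
          then obtain j where j: "j < n" "C!j = z" using n_def by (auto simp: in_set_conv_nth)
          have "E (C!j) y" using j(2) sym[OF yz(1)] by simp
          then have "j \<in> I" using I_def step(3) j(1) by auto
          then have "z \<in> N" using N_def j by auto
          then show False using yz by simp
        qed
        then have zS: "z \<in> S" using yz S_def by simp
        have yS: "y \<in> S" using step(3) X by simp
        have "R y z" using yS zS yz by (simp add: R_def induced_edges_def)
        then have "R\<^sup>*\<^sup>* x z" using step(3) X by auto
        then show ?case using X zS by simp
      qed
      then have "c \<in> X" using reach by blast
      then show False using X S_def c by auto
    qed
    obtain I' where I': "I' \<subseteq> I" "card I' = k" "finite I'"
      using obtain_subset_with_card_n[OF cardI] by blast
    obtain gg where gg: "bij_betw gg {0..<k} I'" using ex_bij_betw_nat_finite[OF I'(3)] I'(2) by metis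
    have ggI: "gg t \<in> I" if "t < k" for t using gg that I' by (auto simp: bij_betw_def)
    have ggn: "gg t < n" if "t < k" for t using ggI[OF that] I_def by simp
    have gginj: "gg a = gg b \<Longrightarrow> a < k \<Longrightarrow> b < k \<Longrightarrow> a = b" for a b
      using gg by (auto simp: bij_betw_def inj_on_def)
    define f where "f t = (if t = 0 then x else if t = 1 then w else C!((gg (t-2) + 1) mod n))" for t
    have fC: "f t \<in> set C" if "t \<ge> 2" "t \<le> k+1" for t
    proof -
      have "(gg (t-2) + 1) mod n < n" using n0 by simp
      then show ?thesis using that f_def n_def by simp
    qed
    have xC: "x \<notin> set C" and wC: "w \<notin> set C" using x wS S_def by auto
    have "has_induced_copy (K2_kK1_V k) (K2_kK1_E k) V E"
      unfolding has_induced_copy_def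
    proof (intro exI conjI)
      show "inj_on f (K2_kK1_V k)"
      proof (rule inj_onI)
        fix a b assume ab: "a \<in> K2_kK1_V k" "b \<in> K2_kK1_V k" "f a = f b"
        then have ab': "a \<le> k+1" "b \<le> k+1" by (auto simp: K2_kK1_V_def)
        have xw: "x \<noteq> w" using Exw irr by blast
        show "a = b"
        proof (cases "a \<ge> 2"; cases "b \<ge> 2")
          assume a2: "a \<ge> 2" and b2: "b \<ge> 2"
          then have "C!((gg (a-2) + 1) mod n) = C!((gg (b-2) + 1) mod n)" using ab f_def by simp
          moreover have "(gg (a-2) + 1) mod n < length C" "(gg (b-2) + 1) mod n < length C"
            using n0 n_def by auto
          ultimately have "(gg (a-2) + 1) mod n = (gg (b-2) + 1) mod n"
            using nth_eq_iff_index_eq[OF C3(2)] by blast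
          moreover have "a - 2 < k" "b - 2 < k" using a2 b2 ab' by auto
          ultimately have "gg (a-2) = gg (b-2)" using sucmod_inj[of "gg (a-2)" n "gg (b-2)"] ggn by simp
          then have "a - 2 = b - 2" using gginj \<open>a - 2 < k\<close> \<open>b - 2 < k\<close> by blast
          then show ?thesis using a2 b2 by simp
        next
          assume a2: "a \<ge> 2" and b2: "\<not> b \<ge> 2"
          then have "f a \<in> set C" using fC ab' by blast
          moreover have "f b = x \<or> f b = w" using b2 f_def by auto
          ultimately show ?thesis using ab xC wC by auto
        next
          assume a2: "\<not> a \<ge> 2" and b2: "b \<ge> 2"
          then have "f b \<in> set C" using fC ab' by blast
          moreover have "f a = x \<or> f a = w" using a2 f_def by auto
          ultimately show ?thesis using ab xC wC by auto
        next
          assume a2: "\<not> a \<ge> 2" and b2: "\<not> b \<ge> 2"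
          then show ?thesis using ab xw f_def by (cases "a = 0"; cases "b = 0") auto
        qed
      qed
      show "f ` K2_kK1_V k \<subseteq> V"
      proof
        fix y assume "y \<in> f ` K2_kK1_V k"
        then obtain t where t: "t \<le> k+1" "y = f t" by (auto simp: K2_kK1_V_def)
        show "y \<in> V"
        proof (cases "t \<ge> 2")
          case True then show ?thesis using fC t C3 by blast
        next
          case False then show ?thesis using t f_def x wS S_def by auto
        qed
      qed
      show "\<forall>a\<in>K2_kK1_V k. \<forall>b\<in>K2_kK1_V k. E (f a) (f b) = K2_kK1_E k a b"
      proof (intro ballI)
        fix a b assume "a \<in> K2_kK1_V k" "b \<in> K2_kK1_V k"
        then have ab': "a \<le> k+1" "b \<le> k+1" by (auto simp: K2_kK1_V_def)
        have side: "\<not> E z (f t)" if "z = x \<or> z = w" "t \<ge> 2" "t \<le> k+1" for z t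
        proof -
          have "gg (t-2) \<in> I" using ggI that by simp
          moreover have "z \<in> X" using that xX wX by auto
          ultimately have "\<not> E (C!((gg (t-2)+1) mod n)) z" using clA by blast
          moreover have "f t = C!((gg (t-2)+1) mod n)" using that f_def by simp
          ultimately show ?thesis using sym by metis
        qed
        show "E (f a) (f b) = K2_kK1_E k a b"
        proof (cases "a \<ge> 2"; cases "b \<ge> 2")
          assume a2: "a \<ge> 2" and b2: "b \<ge> 2"
          have "\<not> E (f a) (f b)"
          proof (cases "a = b")
            case True then show ?thesis using irr by simp
          next
            case False
            have "a - 2 < k" "b - 2 < k" "a - 2 \<noteq> b - 2" using a2 b2 ab' False by auto
            then have "gg (a-2) \<noteq> gg (b-2)" using gginj by blast
            then show ?thesis using clB ggI a2 b2 ab' f_def by auto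
          qed
          then show ?thesis using a2 b2 by (auto simp: K2_kK1_E_def)
        next
          assume a2: "a \<ge> 2" and b2: "\<not> b \<ge> 2"
          have "f b = x \<or> f b = w" using b2 f_def by auto
          then have "\<not> E (f a) (f b)" using side[of "f b" a] a2 ab' sym by blast
          then show ?thesis using a2 b2 by (auto simp: K2_kK1_E_def)
        next
          assume a2: "\<not> a \<ge> 2" and b2: "b \<ge> 2"
          have "f a = x \<or> f a = w" using a2 f_def by auto
          then have "\<not> E (f a) (f b)" using side[of "f a" b] b2 ab' by blast
          then show ?thesis using a2 b2 by (auto simp: K2_kK1_E_def)
        next
          assume a2: "\<not> a \<ge> 2" and b2: "\<not> b \<ge> 2"
          have Ewx: "E w x" using sym[OF Exw] .
          show ?thesis using a2 b2 Exw Ewx irr f_def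
            by (cases "a = 0"; cases "b = 0") (auto simp: K2_kK1_E_def)
        qed
      qed
    qed
    then show False using assms(4) by (simp add: R_free_def)
  qed
qed

end
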